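(* Let $f:\mathcal{X}\to\mathbb{R}$, $\tau\in\mathbb{R}$, and let $\mathbf{x}=[x_1,\dots,x_p]$ be an input with $f(\mathbf{x})\ge\tau$ and $f(\mathbf{x}_{\varnothing})<\tau$. Let $S_1,\dots,S_K$ be the output of $\mathrm{SIScollection}(f,\mathbf{x},\tau)$. Then: (i) for every $k\in\{1,\dots,K\}$ and every $i\in S_k$, $f(\mathbf{x}_{S_k\setminus\{i\}})<\tau$; (ii) for every $k$, let $T_k\subseteq[p]$ be the set passed to $\mathrm{BackSelect}$ in the call that produced $S_k$, and let $T_k=U^{(k)}_{m}\supsetneq U^{(k)}_{m-1}\supsetneq\cdots\supsetneq U^{(k)}_0=\varnothing$ ($m=|T_k|$) be the successive values taken by the variable $S$ during that run of $\mathrm{BackSelect}$. Then $S_k$ is one of the sets $U^{(k)}_j$, it satisfies $f(\mathbf{x}_{S_k})\ge\tau$, and every $U^{(k)}_j$ with $f(\mathbf{x}_{U^{(k)}_j})\ge\tau$ satisfies $|U^{(k)}_j|\ge|S_k|$.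
   Context: Each input $\mathbf{x}\in\mathcal{X}$ has indexable features $\mathbf{x}=[x_1,\dots,x_p]$ with $x_i\in\mathbb{R}^{d_i}$. A fixed mask value $z_i$ is given for each feature $i$ (e.g. the mean of feature $i$). For $S\subseteq[p]=\{1,\dots,p\}$, $\mathbf{x}_S$ denotes the input whose $i$-th feature equals $x_i$ if $i\in S$ and $z_i$ if $i\notin S$ (so $\mathbf{x}_{[p]}=\mathbf{x}$, $\mathbf{x}_\varnothing=\mathbf{z}$). Algorithms (argmax ties are broken by any fixed rule): BackSelect$(f,\mathbf{x},S)$: let $R$ be an empty stack; while $S\neq\varnothing$: let $i^*=\arg\max_{i\in S} f(\mathbf{x}_{S\setminus\{i\}})$, set $S\leftarrow S\setminus\{i^*\}$, push $i^*$ onto $R$; return $R$. FindSIS$(f,\mathbf{x},\tau,R)$: let $S=\varnothing$; while $f(\mathbf{x}_S)<\tau$: pop $i$ from the top of $R$ and set $S\leftarrow S\cup\{i\}$; if $f(\mathbf{x}_S)\ge\tau$ return $S$, else return None. SIScollection$(f,\mathbf{x},\tau)$: let $S=[p]$; for $k=1,2,\dots$: $R=\mathrm{BackSelect}(f,\mathbf{x},S)$; $S_k=\mathrm{FindSIS}(f,\mathbf{x},\tau,R)$; $S\leftarrow S\setminus S_k$; if $f(\mathbf{x}_S)<\tau$, return $S_1,\dots,S_k$. *)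

theory Defs
  imports Complex_Main
begin

text \<open>Features are indexed by a finite type 'i (playing the role of [p]); feature values
  live in an arbitrary type 'v. An input is a map 'i => 'v; z is the fixed masked.\<close>

definition masked :: "('i \<Rightarrow> 'v) \<Rightarrow> ('i \<Rightarrow> 'v) \<Rightarrow> 'i set \<Rightarrow> ('i \<Rightarrow> 'v)" where
  "masked x z S = (\<lambda>i. if i \<in> S then x i else z i)"

definition argmax_set :: "(('i \<Rightarrow> 'v) \<Rightarrow> real) \<Rightarrow> ('i \<Rightarrow> 'v) \<Rightarrow> ('i \<Rightarrow> 'v) \<Rightarrow> 'i set \<Rightarrow> 'i set" where
  "argmax_set f x z S = {i \<in> S. \<forall>j\<in>S. f (masked x z (S - {j})) \<le> f (masked x z (S - {i}))}"

text \<open>BackSelect with a fixed tie-breaking rule tb (given the current S and the set of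
  maximisers, it returns the chosen index). Returns the indices in removal order
  (fuel argument = number of iterations).\<close>
primrec backselect_aux ::
  "(('i \<Rightarrow> 'v) \<Rightarrow> real) \<Rightarrow> ('i \<Rightarrow> 'v) \<Rightarrow> ('i \<Rightarrow> 'v) \<Rightarrow> ('i set \<Rightarrow> 'i set \<Rightarrow> 'i)
    \<Rightarrow> nat \<Rightarrow> 'i set \<Rightarrow> 'i list" where
  "backselect_aux f x z tb 0 S = []"
| "backselect_aux f x z tb (Suc n) S =
     (if S = {} then []
      else (let i = tb S (argmax_set f x z S) in i # backselect_aux f x z tb n (S - {i})))"

definition backselect_removed where
  "backselect_removed f x z tb S = backselect_aux f x z tb (card S) S"

text \<open>The returned stack R, top of the stack first (last pushed = last removed).\<close>
definition BackSelect where
  "BackSelect f x z tb S = rev (backselect_removed f x z tb S)"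

text \<open>Value of the variable S after t iterations of the while loop of BackSelect started at T.\<close>
definition backselect_state where
  "backselect_state f x z tb T t = T - set (take t (backselect_removed f x z tb T))"

primrec findsis_aux ::
  "(('i \<Rightarrow> 'v) \<Rightarrow> real) \<Rightarrow> ('i \<Rightarrow> 'v) \<Rightarrow> ('i \<Rightarrow> 'v) \<Rightarrow> real \<Rightarrow> 'i set \<Rightarrow> 'i list \<Rightarrow> 'i set option" where
  "findsis_aux f x z \<tau> S [] = (if f (masked x z S) \<ge> \<tau> then Some S else None)"
| "findsis_aux f x z \<tau> S (i # R) =
     (if f (masked x z S) \<ge> \<tau> then Some S else findsis_aux f x z \<tau> (insert i S) R)"

definition FindSIS where
  "FindSIS f x z \<tau> R = findsis_aux f x z \<tau> {} R"

text \<open>SIScollection, recording for each round k the pair (T_k, S_k), where T_k is the set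
  passed to BackSelect and S_k the set returned by FindSIS (fuel = number of rounds).\<close>
primrec sis_aux ::
  "(('i \<Rightarrow> 'v) \<Rightarrow> real) \<Rightarrow> ('i \<Rightarrow> 'v) \<Rightarrow> ('i \<Rightarrow> 'v) \<Rightarrow> ('i set \<Rightarrow> 'i set \<Rightarrow> 'i) \<Rightarrow> real
    \<Rightarrow> nat \<Rightarrow> 'i set \<Rightarrow> ('i set \<times> 'i set) list" where
  "sis_aux f x z tb \<tau> 0 S = []"
| "sis_aux f x z tb \<tau> (Suc n) S =
     (case FindSIS f x z \<tau> (BackSelect f x z tb S) of
        None \<Rightarrow> []
      | Some Sk \<Rightarrow> (S, Sk) # (if f (masked x z (S - Sk)) < \<tau> then [] else sis_aux f x z tb \<tau> n (S - Sk)))"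

definition SIS_trace :: "(('i::finite \<Rightarrow> 'v) \<Rightarrow> real) \<Rightarrow> ('i \<Rightarrow> 'v) \<Rightarrow> ('i \<Rightarrow> 'v)
    \<Rightarrow> ('i set \<Rightarrow> 'i set \<Rightarrow> 'i) \<Rightarrow> real \<Rightarrow> ('i set \<times> 'i set) list" where
  "SIS_trace f x z tb \<tau> = sis_aux f x z tb \<tau> (Suc (card (UNIV :: 'i set))) UNIV"

definition SIScollection where
  "SIScollection f x z tb \<tau> = map snd (SIS_trace f x z tb \<tau>)"

end

theory Submission
  imports Defs
begin

lemma argmax_ne:
  assumes "finite S" "S \<noteq> {}"
  shows "argmax_set f x z S \<noteq> {}"
proof -
  let ?g = "\<lambda>i. f (masked x z (S - {i}))"
  have "Max (?g ` S) \<in> ?g ` S" using assms by simp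
  then obtain i where i: "i \<in> S" "?g i = Max (?g ` S)" by auto
  have "\<forall>j\<in>S. ?g j \<le> ?g i" using i assms by simp
  then show ?thesis using i unfolding argmax_set_def by blast
qed

lemma bs_aux:
  assumes tb: "\<And>S A. A \<noteq> {} \<Longrightarrow> tb S A \<in> A"
  shows "finite S \<Longrightarrow> card S = n \<Longrightarrow>
    length (backselect_aux f x z tb n S) = n \<and> distinct (backselect_aux f x z tb n S)
    \<and> set (backselect_aux f x z tb n S) = S
    \<and> (\<forall>t<n. backselect_aux f x z tb n S ! t \<in> argmax_set f x z (S - set (take t (backselect_aux f x z tb n S))))"
proof (induction n arbitrary: S)
  case 0
  then show ?case by simp
next
  case (Suc n)
  then have ne: "S \<noteq> {}" by auto
  define i where "i = tb S (argmax_set f x z S)"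
  have iA: "i \<in> argmax_set f x z S" unfolding i_def by (rule tb[OF argmax_ne[OF Suc.prems(1) ne]])
  then have iS: "i \<in> S" unfolding argmax_set_def by auto
  define L where "L = backselect_aux f x z tb n (S - {i})"
  have eq: "backselect_aux f x z tb (Suc n) S = i # L" using ne by (simp add: i_def L_def Let_def)
  have IH: "length L = n \<and> distinct L \<and> set L = S - {i}
    \<and> (\<forall>t<n. L ! t \<in> argmax_set f x z ((S - {i}) - set (take t L)))"
  proof -
    have "finite (S - {i})" "card (S - {i}) = n" using Suc.prems iS by auto
    from Suc.IH[OF this] show ?thesis unfolding L_def .
  qed
  have "\<forall>t<Suc n. (i # L) ! t \<in> argmax_set f x z (S - set (take t (i # L)))"
  proof (intro allI impI)
    fix t assume t: "t < Suc n"
    show "(i # L) ! t \<in> argmax_set f x z (S - set (take t (i # L)))"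
    proof (cases t)
      case 0 then show ?thesis using iA by simp
    next
      case (Suc t')
      then have "t' < n" using t by simp
      then have "L ! t' \<in> argmax_set f x z ((S - {i}) - set (take t' L))" using IH by blast
      moreover have "(S - {i}) - set (take t' L) = S - set (take t (i # L))" using Suc by auto
      ultimately show ?thesis using Suc by simp
    qed
  qed
  moreover have "length (i # L) = Suc n" using IH by simp
  moreover have "distinct (i # L)" using IH by simp
  moreover have "set (i # L) = S" using IH iS by auto
  ultimately show ?case unfolding eq by blast
qed

lemma findsis_aux_Some:
  "findsis_aux f x z \<tau> S R = Some S' \<Longrightarrow> \<exists>j \<le> length R. S' = S \<union> set (take j R)
     \<and> f (masked x z S') \<ge> \<tau> \<and> (\<forall>j'<j. f (masked x z (S \<union> set (take j' R))) < \<tau>)"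
proof (induction R arbitrary: S)
  case Nil
  then show ?case by (auto split: if_splits)
next
  case (Cons i R)
  show ?case
  proof (cases "f (masked x z S) \<ge> \<tau>")
    case True
    then show ?thesis using Cons.prems by (intro exI[of _ 0]) auto
  next
    case False
    then have "findsis_aux f x z \<tau> (insert i S) R = Some S'" using Cons.prems by simp
    from Cons.IH[OF this] obtain j where j: "j \<le> length R" "S' = insert i S \<union> set (take j R)"
      "f (masked x z S') \<ge> \<tau>" "\<forall>j'<j. f (masked x z (insert i S \<union> set (take j' R))) < \<tau>" by blast
    show ?thesis
    proof (intro exI[of _ "Suc j"] conjI allI impI)
      show "Suc j \<le> length (i # R)" using j by simp
      show "S' = S \<union> set (take (Suc j) (i # R))" using j by auto
      show "f (masked x z S') \<ge> \<tau>" using j by simp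
      fix j' assume "j' < Suc j"
      then show "f (masked x z (S \<union> set (take j' (i # R)))) < \<tau>"
        using j(4) False by (cases j') auto
    qed
  qed
qed

lemma sis_aux_mem:
  "(T, Sk) \<in> set (sis_aux f x z tb \<tau> n S) \<Longrightarrow> FindSIS f x z \<tau> (BackSelect f x z tb T) = Some Sk"
proof (induction n arbitrary: S)
  case 0 then show ?case by simp
next
  case (Suc n)
  then show ?case by (auto split: option.splits if_splits)
qed

lemma main:
  fixes f :: "('i \<Rightarrow> 'v) \<Rightarrow> real"
  assumes tb: "\<And>S A. A \<noteq> {} \<Longrightarrow> tb S A \<in> A"
    and fz: "f (masked x z {}) < \<tau>"
    and fin: "finite T"
    and FS: "FindSIS f x z \<tau> (BackSelect f x z tb T) = Some Sk"
  shows "let m = card T; U = (\<lambda>j. backselect_state f x z tb T (m - j))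
            in (\<forall>i \<in> Sk. f (masked x z (Sk - {i})) < \<tau>)
             \<and> (\<exists>j \<le> m. Sk = U j)
             \<and> f (masked x z Sk) \<ge> \<tau>
             \<and> (\<forall>j \<le> m. f (masked x z (U j)) \<ge> \<tau> \<longrightarrow> card (U j) \<ge> card Sk)"
proof -
  define m where "m = card T"
  define L where "L = backselect_removed f x z tb T"
  have P: "length L = m \<and> distinct L \<and> set L = T
    \<and> (\<forall>t<m. L ! t \<in> argmax_set f x z (T - set (take t L)))"
    unfolding L_def backselect_removed_def m_def using bs_aux[where tb=tb and f=f and x=x and z=z, OF tb fin refl] by blast
  define U where "U = (\<lambda>j. backselect_state f x z tb T (m - j))"
  have UL: "U j = T - set (take (m - j) L)" for j
    unfolding U_def backselect_state_def L_def by simp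
  have Udrop: "U j = set (drop (m - j) L)" for j
  proof -
    have a: "set L = set (take (m-j) L) \<union> set (drop (m-j) L)"
      by (metis append_take_drop_id set_append)
    have "distinct (take (m-j) L @ drop (m-j) L)" using P by simp
    then have b: "set (take (m-j) L) \<inter> set (drop (m-j) L) = {}"
      by (simp only: distinct_append)
    have c: "set L = T" using P by blast
    show ?thesis unfolding UL using a b c by blast
  qed
  have Utake: "U j = set (take j (rev L))" if "j \<le> m" for j
    using Udrop[of j] P that by (simp add: take_rev)
  have Ucard: "card (U j) = j" if "j \<le> m" for j
    using Udrop[of j] P that by (simp add: distinct_card)
  from FS have "findsis_aux f x z \<tau> {} (rev L) = Some Sk"
    unfolding FindSIS_def BackSelect_def L_def by simp
  from findsis_aux_Some[OF this] obtain j where j: "j \<le> m" "Sk = set (take j (rev L))"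
    "f (masked x z Sk) \<ge> \<tau>" "\<forall>j'<j. f (masked x z (set (take j' (rev L)))) < \<tau>"
    using P by auto
  have SkU: "Sk = U j" using j Utake by simp
  have minj: "\<forall>j'<j. f (masked x z (U j')) < \<tau>" using j Utake by simp
  have j1: "j \<ge> 1"
  proof (rule ccontr)
    assume "\<not> j \<ge> 1"
    then have "j = 0" by simp
    then have "Sk = {}" using j by simp
    then show False using j(3) fz by simp
  qed
  define a where "a = L ! (m - j)"
  have "m - j < m" using j j1 by simp
  then have aA: "a \<in> argmax_set f x z (U j)" unfolding a_def UL using P by blast
  have "U (j - 1) = U j - {a}"
  proof -
    have "m - (j - 1) = Suc (m - j)" using j j1 by simp
    moreover have "m - j < length L" using P j j1 by simp
    ultimately show ?thesis unfolding UL a_def by (auto simp: take_Suc_conv_app_nth)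
  qed
  moreover have "j - 1 < j" using j1 by simp
  ultimately have fa: "f (masked x z (U j - {a})) < \<tau>" using minj by metis
  have part1: "\<forall>i \<in> Sk. f (masked x z (Sk - {i})) < \<tau>"
  proof
    fix i assume "i \<in> Sk"
    then have "f (masked x z (U j - {i})) \<le> f (masked x z (U j - {a}))"
      using aA SkU unfolding argmax_set_def by auto
    then show "f (masked x z (Sk - {i})) < \<tau>" using fa SkU by simp
  qed
  have part4: "\<forall>j' \<le> m. f (masked x z (U j')) \<ge> \<tau> \<longrightarrow> card (U j') \<ge> card Sk"
  proof (intro allI impI)
    fix j' assume "j' \<le> m" "f (masked x z (U j')) \<ge> \<tau>"
    then have "\<not> j' < j" using minj by force
    moreover have "card (U j') = j'" using Ucard \<open>j' \<le> m\<close> by blast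
    moreover have "card Sk = j" unfolding SkU using Ucard j(1) by blast
    ultimately show "card (U j') \<ge> card Sk" by linarith
  qed
  have ex: "\<exists>j \<le> m. Sk = U j" using SkU j(1) by blast
  have all: "(\<forall>i \<in> Sk. f (masked x z (Sk - {i})) < \<tau>)
             \<and> (\<exists>j \<le> m. Sk = U j)
             \<and> f (masked x z Sk) \<ge> \<tau>
             \<and> (\<forall>j \<le> m. f (masked x z (U j)) \<ge> \<tau> \<longrightarrow> card (U j) \<ge> card Sk)"
    using part1 ex j(3) part4 by (intro conjI)
  then show ?thesis unfolding Let_def U_def m_def .
qed

theorem proposition1:
  fixes f :: "('i::finite \<Rightarrow> 'v) \<Rightarrow> real" and x z :: "'i \<Rightarrow> 'v" and \<tau> :: real
    and tb :: "'i set \<Rightarrow> 'i set \<Rightarrow> 'i"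
  assumes tb: "\<And>S A. A \<noteq> {} \<Longrightarrow> tb S A \<in> A"
    and fx: "f x \<ge> \<tau>"
    and fz: "f (masked x z {}) < \<tau>"
  shows "\<forall>k < length (SIS_trace f x z tb \<tau>).
           (let T = fst (SIS_trace f x z tb \<tau> ! k);
                Sk = snd (SIS_trace f x z tb \<tau> ! k);
                m = card T;
                U = (\<lambda>j. backselect_state f x z tb T (m - j))
            in Sk = SIScollection f x z tb \<tau> ! k
             \<and> (\<forall>i \<in> Sk. f (masked x z (Sk - {i})) < \<tau>)
             \<and> (\<exists>j \<le> m. Sk = U j)
             \<and> f (masked x z Sk) \<ge> \<tau>
             \<and> (\<forall>j \<le> m. f (masked x z (U j)) \<ge> \<tau> \<longrightarrow> card (U j) \<ge> card Sk))"
proof (intro allI impI)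
  fix k assume k: "k < length (SIS_trace f x z tb \<tau>)"
  obtain T Sk where TS: "SIS_trace f x z tb \<tau> ! k = (T, Sk)" by fastforce
  have "(T, Sk) \<in> set (SIS_trace f x z tb \<tau>)" using k TS by (metis nth_mem)
  then have FS: "FindSIS f x z \<tau> (BackSelect f x z tb T) = Some Sk"
    unfolding SIS_trace_def by (rule sis_aux_mem)
  have M: "let m = card T; U = (\<lambda>j. backselect_state f x z tb T (m - j))
            in (\<forall>i \<in> Sk. f (masked x z (Sk - {i})) < \<tau>)
             \<and> (\<exists>j \<le> m. Sk = U j)
             \<and> f (masked x z Sk) \<ge> \<tau>
             \<and> (\<forall>j \<le> m. f (masked x z (U j)) \<ge> \<tau> \<longrightarrow> card (U j) \<ge> card Sk)"
    by (rule main[OF tb fz finite FS])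
  have "Sk = SIScollection f x z tb \<tau> ! k"
    unfolding SIScollection_def using k TS by simp
  then show "let T = fst (SIS_trace f x z tb \<tau> ! k);
                Sk = snd (SIS_trace f x z tb \<tau> ! k);
                m = card T;
                U = (\<lambda>j. backselect_state f x z tb T (m - j))
            in Sk = SIScollection f x z tb \<tau> ! k
             \<and> (\<forall>i \<in> Sk. f (masked x z (Sk - {i})) < \<tau>)
             \<and> (\<exists>j \<le> m. Sk = U j)
             \<and> f (masked x z Sk) \<ge> \<tau>
             \<and> (\<forall>j \<le> m. f (masked x z (U j)) \<ge> \<tau> \<longrightarrow> card (U j) \<ge> card Sk)"
    using M TS unfolding Let_def by simp
qed

end
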